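(* Let $U$ be a finite set of men and $W_1\subseteq W_2$ finite sets of women with $|W_1|\le|W_2|=|U|$, each man having a strict total order over $W_2$ and each woman a strict total order over $U$. Let $M_1,M_1'$ be stable matchings of $(U,W_1)$ such that $M_1'$ men-dominates $M_1$, and let $M_2$ be a stable matching of $(U,W_2)$. Define $M_2'$ as the union of: the pairs of $M_1'\cap M_2$; for each path component of $G(M_1',M_2)$, its edges belonging to $M_2$; for each cycle of $G(M_1',M_2)$ of Type I, its edges belonging to $M_2$; for each cycle of $G(M_1',M_2)$ of Type II, its edges belonging to $M_1'$. Then $|M_1'\setminus M_2'|\le |M_1\setminus M_2|$.
   Context: A matching is a set of man–woman pairs with each person in at most one pair; a blocking pair of $M$ is a pair $(u,w)\notin M$ with ($u$ unmatched or preferring $w$ to his partner) and ($w$ unmatched or preferring $u$ to her partner); a matching is stable if it has no blocking pair. Preferences in a sub-instance are restrictions of the given ones. $M$ men-dominates $M'$ if every man's partner in $M$ is at least as good for him as his partner in $M'$. The difference graph $G(M,M')$ has vertex set $U\cup W_2$ and edge set $M\triangle M'$. A cycle $C$ of $G(M_1',M_2)$ is of Type I if every man in $C$ strictly prefers his partner in $M_2$ to his partner in $M_1'$ and every woman in $C$ strictly prefers her partner in $M_1'$ to her partner in $M_2$; it is of Type II if every man in $C$ strictly prefers his partner in $M_1'$ to his partner in $M_2$ and every woman in $C$ strictly prefers her partner in $M_2$ to her partner in $M_1'$ (every cycle is of one of these types). *)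

theory Defs
  imports Main
begin

text \<open>Preferences: pm u a b means man u strictly prefers woman a to woman b;
  pw w x y means woman w strictly prefers man x to man y.
  A matching is a set of (man, woman) pairs.\<close>

definition strict_total_on :: "'a set \<Rightarrow> ('a \<Rightarrow> 'a \<Rightarrow> bool) \<Rightarrow> bool" where
  "strict_total_on A r \<longleftrightarrow>
     (\<forall>x\<in>A. \<not> r x x) \<and>
     (\<forall>x\<in>A. \<forall>y\<in>A. \<forall>z\<in>A. r x y \<longrightarrow> r y z \<longrightarrow> r x z) \<and>
     (\<forall>x\<in>A. \<forall>y\<in>A. x \<noteq> y \<longrightarrow> r x y \<or> r y x)"

definition is_matching :: "'m set \<Rightarrow> 'w set \<Rightarrow> ('m \<times> 'w) set \<Rightarrow> bool" where
  "is_matching U W M \<longleftrightarrow> M \<subseteq> U \<times> W \<and>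
     (\<forall>u w w'. (u, w) \<in> M \<longrightarrow> (u, w') \<in> M \<longrightarrow> w = w') \<and>
     (\<forall>u u' w. (u, w) \<in> M \<longrightarrow> (u', w) \<in> M \<longrightarrow> u = u')"

definition blocking_pair ::
  "('m \<Rightarrow> 'w \<Rightarrow> 'w \<Rightarrow> bool) \<Rightarrow> ('w \<Rightarrow> 'm \<Rightarrow> 'm \<Rightarrow> bool) \<Rightarrow> ('m \<times> 'w) set \<Rightarrow> 'm \<Rightarrow> 'w \<Rightarrow> bool" where
  "blocking_pair pm pw M u w \<longleftrightarrow> (u, w) \<notin> M \<and>
     (\<forall>w'. (u, w') \<in> M \<longrightarrow> pm u w w') \<and>
     (\<forall>u'. (u', w) \<in> M \<longrightarrow> pw w u u')"

definition stable_matching ::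
  "('m \<Rightarrow> 'w \<Rightarrow> 'w \<Rightarrow> bool) \<Rightarrow> ('w \<Rightarrow> 'm \<Rightarrow> 'm \<Rightarrow> bool) \<Rightarrow> 'm set \<Rightarrow> 'w set \<Rightarrow> ('m \<times> 'w) set \<Rightarrow> bool" where
  "stable_matching pm pw U W M \<longleftrightarrow> is_matching U W M \<and>
     (\<forall>u\<in>U. \<forall>w\<in>W. \<not> blocking_pair pm pw M u w)"

text \<open>M men-dominates M': every man's partner in M is at least as good as his partner in M'
  (being unmatched is worst).\<close>
definition men_dominates :: "('m \<Rightarrow> 'w \<Rightarrow> 'w \<Rightarrow> bool) \<Rightarrow> ('m \<times> 'w) set \<Rightarrow> ('m \<times> 'w) set \<Rightarrow> bool" where
  "men_dominates pm M M' \<longleftrightarrow>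
     (\<forall>u w'. (u, w') \<in> M' \<longrightarrow> (\<exists>w. (u, w) \<in> M \<and> (w = w' \<or> pm u w w')))"

definition diff_edges :: "('m \<times> 'w) set \<Rightarrow> ('m \<times> 'w) set \<Rightarrow> ('m \<times> 'w) set" where
  "diff_edges M M' = (M - M') \<union> (M' - M)"

definition edge_adj :: "('m \<times> 'w) set \<Rightarrow> (('m \<times> 'w) \<times> ('m \<times> 'w)) set" where
  "edge_adj E = {(e1, e2). e1 \<in> E \<and> e2 \<in> E \<and> (fst e1 = fst e2 \<or> snd e1 = snd e2)}"

definition comp_of :: "('m \<times> 'w) set \<Rightarrow> ('m \<times> 'w) \<Rightarrow> ('m \<times> 'w) set" where
  "comp_of E e = {e'. (e, e') \<in> (edge_adj E)\<^sup>*}"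

text \<open>A component is a cycle iff every vertex on it has degree 2 (max degree is 2).\<close>
definition is_cycle :: "('m \<times> 'w) set \<Rightarrow> bool" where
  "is_cycle C \<longleftrightarrow> C \<noteq> {} \<and>
     (\<forall>u w. (u, w) \<in> C \<longrightarrow> card {w'. (u, w') \<in> C} = 2 \<and> card {u'. (u', w) \<in> C} = 2)"

definition typeI ::
  "('m \<Rightarrow> 'w \<Rightarrow> 'w \<Rightarrow> bool) \<Rightarrow> ('w \<Rightarrow> 'm \<Rightarrow> 'm \<Rightarrow> bool) \<Rightarrow> ('m \<times> 'w) set \<Rightarrow> ('m \<times> 'w) set \<Rightarrow> ('m \<times> 'w) set \<Rightarrow> bool" where
  "typeI pm pw M1' M2 C \<longleftrightarrow>
     (\<forall>u w w'. (u, w) \<in> C \<inter> M2 \<longrightarrow> (u, w') \<in> C \<inter> M1' \<longrightarrow> pm u w w') \<and>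
     (\<forall>w u u'. (u', w) \<in> C \<inter> M1' \<longrightarrow> (u, w) \<in> C \<inter> M2 \<longrightarrow> pw w u' u)"

definition typeII ::
  "('m \<Rightarrow> 'w \<Rightarrow> 'w \<Rightarrow> bool) \<Rightarrow> ('w \<Rightarrow> 'm \<Rightarrow> 'm \<Rightarrow> bool) \<Rightarrow> ('m \<times> 'w) set \<Rightarrow> ('m \<times> 'w) set \<Rightarrow> ('m \<times> 'w) set \<Rightarrow> bool" where
  "typeII pm pw M1' M2 C \<longleftrightarrow>
     (\<forall>u w w'. (u, w) \<in> C \<inter> M2 \<longrightarrow> (u, w') \<in> C \<inter> M1' \<longrightarrow> pm u w' w) \<and>
     (\<forall>w u u'. (u', w) \<in> C \<inter> M1' \<longrightarrow> (u, w) \<in> C \<inter> M2 \<longrightarrow> pw w u u')"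

definition new_matching ::
  "('m \<Rightarrow> 'w \<Rightarrow> 'w \<Rightarrow> bool) \<Rightarrow> ('w \<Rightarrow> 'm \<Rightarrow> 'm \<Rightarrow> bool) \<Rightarrow> ('m \<times> 'w) set \<Rightarrow> ('m \<times> 'w) set \<Rightarrow> ('m \<times> 'w) set" where
  "new_matching pm pw M1' M2 =
     (let E = diff_edges M1' M2 in
       (M1' \<inter> M2)
       \<union> {e \<in> M2 - M1'. \<not> is_cycle (comp_of E e)}
       \<union> {e \<in> M2 - M1'. is_cycle (comp_of E e) \<and> typeI pm pw M1' M2 (comp_of E e)}
       \<union> {e \<in> M1' - M2. is_cycle (comp_of E e) \<and> typeII pm pw M1' M2 (comp_of E e)})"

end

theory Submission
  imports Defs
begin

lemma step:
  assumes M2: "stable_matching pm pw U W2 M2" and M1': "stable_matching pm pw U W1 M1'"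
  and W: "W1 \<subseteq> W2" and tm: "\<forall>u\<in>U. strict_total_on W2 (pm u)"
  and tw: "\<forall>w\<in>W2. strict_total_on U (pw w)"
  and xa: "(x,a) \<in> M1'" and xb: "(x,b)\<in>M2" and p: "pm x a b"
  shows "\<exists>y c. (y,a)\<in>M2 \<and> pw a y x \<and> (y,c)\<in>M1' \<and> pm y c a"
proof -
  have m1: "is_matching U W1 M1'" and m2: "is_matching U W2 M2"
    using M1' M2 by (auto simp: stable_matching_def)
  have xU: "x \<in> U" and aW1: "a \<in> W1" using m1 xa by (auto simp: is_matching_def)
  have aW: "a \<in> W2" using aW1 W by auto
  have ab: "a \<noteq> b" using p tm xU aW unfolding strict_total_on_def by blast
  have xaM2: "(x,a) \<notin> M2" using m2 xb ab by (auto simp: is_matching_def)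
  have "\<not> blocking_pair pm pw M2 x a" using M2 xU aW by (auto simp: stable_matching_def)
  moreover have "\<forall>w'. (x, w') \<in> M2 \<longrightarrow> pm x a w'" using m2 xb p by (auto simp: is_matching_def)
  ultimately obtain y where ya: "(y,a)\<in>M2" and nyx: "\<not> pw a x y"
    using xaM2 by (auto simp: blocking_pair_def)
  have yU: "y \<in> U" using m2 ya by (auto simp: is_matching_def)
  have yx: "y \<noteq> x" using ya xaM2 by auto
  have pyx: "pw a y x" using tw aW yU xU yx nyx unfolding strict_total_on_def by blast
  have yaM1: "(y,a) \<notin> M1'" using m1 xa yx by (auto simp: is_matching_def)
  have "\<not> blocking_pair pm pw M1' y a" using M1' yU aW1 by (auto simp: stable_matching_def)
  moreover have "\<forall>u'. (u', a) \<in> M1' \<longrightarrow> pw a y u'" using m1 xa pyx unfolding is_matching_def by blast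
  ultimately obtain c where yc: "(y,c)\<in>M1'" and nc: "\<not> pm y a c"
    using yaM1 by (auto simp: blocking_pair_def)
  have cW: "c \<in> W2" using m1 yc W by (auto simp: is_matching_def)
  have ca: "c \<noteq> a" using yc yaM1 by auto
  have "pm y c a" using tm yU cW aW ca nc unfolding strict_total_on_def by blast
  thus ?thesis using ya pyx yc by blast
qed

lemma women_matched:
  assumes S: "stable_matching pm pw U W M" and fU: "finite U" and fW: "finite W"
    and c: "card W \<le> card U"
  shows "W \<subseteq> snd ` M"
proof
  fix w assume wW: "w \<in> W"
  show "w \<in> snd ` M"
  proof (rule ccontr)
    assume nw: "w \<notin> snd ` M"
    have m: "is_matching U W M" using S by (auto simp: stable_matching_def)
    have MUW: "M \<subseteq> U \<times> W" using m by (auto simp: is_matching_def)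
    have fM: "finite M" using MUW fU fW finite_subset by blast
    have isn: "inj_on snd M" using m by (auto simp: is_matching_def inj_on_def)
    have if1: "inj_on fst M" using m by (auto simp: is_matching_def inj_on_def)
    have "snd ` M \<subseteq> W - {w}" using MUW nw by auto
    hence "card (snd ` M) \<le> card (W - {w})" using fW by (simp add: card_mono)
    also have "\<dots> < card W" using fW wW by (rule card_Diff1_less)
    finally have "card M < card U" using isn c by (simp add: card_image)
    hence "card (fst ` M) < card U" using if1 by (simp add: card_image)
    moreover have "fst ` M \<subseteq> U" using MUW by auto
    moreover have fsub: "fst ` M \<subseteq> U" using MUW by auto
    ultimately have "\<not> U \<subseteq> fst ` M"
      using card_mono[OF finite_subset[OF fsub fU]] by (meson leD)
    then obtain u where uU: "u \<in> U" and nu: "u \<notin> fst ` M" by blast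
    have "blocking_pair pm pw M u w" unfolding blocking_pair_def
      using nu nw by (force simp: image_iff)
    thus False using S uU wW by (auto simp: stable_matching_def)
  qed
qed

lemma comp_sub:
  assumes cl: "\<And>e1 e2. e1 \<in> C \<Longrightarrow> (e1, e2) \<in> edge_adj E \<Longrightarrow> e2 \<in> C" and e: "e \<in> C"
  shows "comp_of E e \<subseteq> C"
proof
  fix e' assume "e' \<in> comp_of E e"
  hence "(e, e') \<in> (edge_adj E)\<^sup>*" by (simp add: comp_of_def)
  thus "e' \<in> C" by (induction rule: rtrancl_induct) (use e cl in auto)
qed

lemma comp_in_E:
  assumes "e \<in> E" shows "comp_of E e \<subseteq> E"
  by (rule comp_sub) (auto simp: edge_adj_def assms)

lemma comp_step:
  assumes "e1 \<in> comp_of E e" "e1 \<in> E" "e2 \<in> E" "fst e1 = fst e2 \<or> snd e1 = snd e2"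
  shows "e2 \<in> comp_of E e"
proof -
  have "(e1, e2) \<in> edge_adj E" using assms by (auto simp: edge_adj_def)
  thus ?thesis using assms(1) by (auto simp: comp_of_def)
qed

lemma card2: "a \<noteq> b \<Longrightarrow> card {a, b} = 2" by simp

theorem lemma3:
  fixes U :: "'m set" and W1 W2 :: "'w set"
    and pm :: "'m \<Rightarrow> 'w \<Rightarrow> 'w \<Rightarrow> bool" and pw :: "'w \<Rightarrow> 'm \<Rightarrow> 'm \<Rightarrow> bool"
    and M1 M1' M2 :: "('m \<times> 'w) set"
  assumes "finite U" and "finite W2" and "W1 \<subseteq> W2"
    and "card W1 \<le> card W2" and "card W2 = card U"
    and "\<forall>u\<in>U. strict_total_on W2 (pm u)"
    and "\<forall>w\<in>W2. strict_total_on U (pw w)"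
    and "stable_matching pm pw U W1 M1"
    and "stable_matching pm pw U W1 M1'"
    and "men_dominates pm M1' M1"
    and "stable_matching pm pw U W2 M2"
  shows "card (M1' - new_matching pm pw M1' M2) \<le> card (M1 - M2)"
proof -
  note fU = assms(1) and fW2 = assms(2) and W = assms(3) and tm = assms(6) and tw = assms(7)
    and S1 = assms(8) and S1' = assms(9) and dom = assms(10) and S2 = assms(11)
  have fW1: "finite W1" using W fW2 finite_subset by blast
  have m1: "is_matching U W1 M1" and m1': "is_matching U W1 M1'" and m2: "is_matching U W2 M2"
    using S1 S1' S2 by (auto simp: stable_matching_def)
  have M1U: "M1 \<subseteq> U \<times> W1" and M1'U: "M1' \<subseteq> U \<times> W1" and M2U: "M2 \<subseteq> U \<times> W2"
    using m1 m1' m2 by (auto simp: is_matching_def)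
  have u1: "\<And>u w w'. (u,w)\<in>M1 \<Longrightarrow> (u,w')\<in>M1 \<Longrightarrow> w = w'"
   and u1': "\<And>u w w'. (u,w)\<in>M1' \<Longrightarrow> (u,w')\<in>M1' \<Longrightarrow> w = w'"
   and v1': "\<And>u u' w. (u,w)\<in>M1' \<Longrightarrow> (u',w)\<in>M1' \<Longrightarrow> u = u'"
   and u2: "\<And>u w w'. (u,w)\<in>M2 \<Longrightarrow> (u,w')\<in>M2 \<Longrightarrow> w = w'"
   and v2: "\<And>u u' w. (u,w)\<in>M2 \<Longrightarrow> (u',w)\<in>M2 \<Longrightarrow> u = u'"
    using m1 m1' m2 unfolding is_matching_def by blast+
  define E where "E = diff_edges M1' M2"
  have Eiff: "\<And>e. e \<in> E \<longleftrightarrow> (e \<in> M1' \<and> e \<notin> M2) \<or> (e \<in> M2 \<and> e \<notin> M1')"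
    by (auto simp: E_def diff_edges_def)
  define G where "G = {x\<in>U. \<exists>a b. (x,a)\<in>M1' \<and> (x,b)\<in>M2 \<and> pm x a b}"
  have fG: "finite G" using fU by (simp add: G_def)
  have stepG: "\<exists>y. \<exists>a. (x,a)\<in>M1' \<and> (y,a)\<in>M2 \<and> y\<in>G \<and> pw a y x" if xG0: "x \<in> G" for x
  proof -
    obtain a b where xa: "(x,a)\<in>M1'" and xb: "(x,b)\<in>M2" and p: "pm x a b"
      using xG0 unfolding G_def by blast
    obtain y c where "(y,a)\<in>M2" "pw a y x" "(y,c)\<in>M1'" "pm y c a"
      using step[OF S2 S1' W tm tw xa xb p] by blast
    moreover have "y \<in> U" using \<open>(y,a)\<in>M2\<close> M2U by auto
    ultimately show ?thesis using xa by (auto simp: G_def)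
  qed
  define f where "f x = (SOME y. \<exists>a. (x,a)\<in>M1' \<and> (y,a)\<in>M2 \<and> y\<in>G \<and> pw a y x)" for x
  have fprop: "\<exists>a. (x,a)\<in>M1' \<and> (f x,a)\<in>M2 \<and> f x\<in>G \<and> pw a (f x) x" if "x \<in> G" for x
    unfolding f_def using someI_ex[OF stepG[OF that]] .
  have fG_sub: "f ` G \<subseteq> G" using fprop by blast
  have finj: "inj_on f G"
  proof (rule inj_onI)
    fix x y assume "x \<in> G" "y \<in> G" "f x = f y"
    then obtain a b where "(x,a)\<in>M1'" "(f x,a)\<in>M2" "(y,b)\<in>M1'" "(f y,b)\<in>M2"
      using fprop by blast
    thus "x = y" using u2 v1' \<open>f x = f y\<close> by metis
  qed
  have fsurj: "f ` G = G" using endo_inj_surj[OF fG fG_sub finj] .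
  have Gdef: "\<exists>a b. (x,a)\<in>M1' \<and> (x,b)\<in>M2 \<and> pm x a b \<and> a \<noteq> b" if xG0: "x \<in> G" for x
  proof -
    obtain a b where "(x,a)\<in>M1'" "(x,b)\<in>M2" "pm x a b" using xG0 unfolding G_def by blast
    moreover have "a \<in> W2" using \<open>(x,a)\<in>M1'\<close> M1'U W by auto
    moreover have "x \<in> U" using xG0 unfolding G_def by blast
    ultimately show ?thesis using tm unfolding strict_total_on_def by blast
  qed
  define C where "C = {e. fst e \<in> G \<and> (e \<in> M1' \<or> e \<in> M2)}"
  have Ccl: "e2 \<in> C" if "e1 \<in> C" "(e1,e2) \<in> edge_adj E" for e1 e2
  proof -
    obtain x a where e1: "e1 = (x,a)" by (cases e1)
    obtain y c where e2: "e2 = (y,c)" by (cases e2)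
    have xG: "x \<in> G" and e1M: "(x,a) \<in> M1' \<or> (x,a) \<in> M2" using that(1) by (auto simp: C_def e1)
    have e2E: "(y,c) \<in> M1' \<or> (y,c) \<in> M2" and adj: "x = y \<or> a = c"
      using that(2) Eiff by (auto simp: edge_adj_def e1 e2)
    show ?thesis
    proof (cases "x = y")
      case True thus ?thesis using xG e2E by (auto simp: C_def e2)
    next
      case False
      hence ac: "a = c" using adj by auto
      have "y \<in> G"
      proof (cases "(x,a) \<in> M1'")
        case True
        obtain a' where "(x,a')\<in>M1'" "(f x,a')\<in>M2" "f x\<in>G" using fprop xG by blast
        moreover have "(y,c) \<in> M2" using e2E True ac False v1' by blast
        ultimately show ?thesis using True ac u1' v2 by metis
      next
        case False2: False
        hence xaM2: "(x,a) \<in> M2" using e1M by auto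
        have ycM1: "(y,c) \<in> M1'" using e2E xaM2 ac False v2 by blast
        obtain z where zG: "z \<in> G" and xz: "x = f z" using fsurj xG by blast
        obtain a' where "(z,a')\<in>M1'" "(f z,a')\<in>M2" using fprop zG by blast
        hence "a' = a" using xz xaM2 u2 by metis
        thus ?thesis using \<open>(z,a')\<in>M1'\<close> ycM1 ac v1' zG by metis
      qed
      thus ?thesis using e2E by (auto simp: C_def e2)
    qed
  qed
  have cyc: "is_cycle (comp_of E (x,a)) \<and> typeII pm pw M1' M2 (comp_of E (x,a))"
    if xG: "x \<in> G" and xa: "(x,a) \<in> M1'" for x a
  proof -
    define K where "K = comp_of E (x,a)"
    have xaC: "(x,a) \<in> C" using xG xa by (auto simp: C_def)
    have KC: "K \<subseteq> C" unfolding K_def by (rule comp_sub[OF Ccl xaC])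
    have xaE: "(x,a) \<in> E"
    proof -
      obtain a' b where "(x,a')\<in>M1'" "(x,b)\<in>M2" "a' \<noteq> b" using Gdef xG by blast
      thus ?thesis using xa u1' u2 Eiff by metis
    qed
    have KE: "K \<subseteq> E" unfolding K_def by (rule comp_in_E[OF xaE])
    have selfK: "(x,a) \<in> K" by (simp add: K_def comp_of_def)
    have men: "card {w'. (u,w') \<in> K} = 2" and women: "card {u'. (u',w) \<in> K} = 2"
      if uw: "(u,w) \<in> K" for u w
    proof -
      have uG: "u \<in> G" using uw KC by (auto simp: C_def)
      obtain p q where up: "(u,p)\<in>M1'" and uq: "(u,q)\<in>M2" and pq: "p \<noteq> q" using Gdef uG by blast
      have upE: "(u,p) \<in> E" using up uq pq u2 Eiff by metis
      have uqE: "(u,q) \<in> E" using up uq pq u1' Eiff by metis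
      have uwE: "(u,w) \<in> E" using uw KE by auto
      have upK: "(u,p) \<in> K" using comp_step[of "(u,w)" E "(x,a)" "(u,p)"] uw uwE upE K_def by auto
      have uqK: "(u,q) \<in> K" using comp_step[of "(u,w)" E "(x,a)" "(u,q)"] uw uwE uqE K_def by auto
      have "{w'. (u,w') \<in> K} = {p,q}"
      proof
        show "{w'. (u,w') \<in> K} \<subseteq> {p,q}" using KE Eiff up uq u1' u2 by blast
        show "{p,q} \<subseteq> {w'. (u,w') \<in> K}" using upK uqK by auto
      qed
      thus "card {w'. (u,w') \<in> K} = 2" using pq by simp
      show "card {u'. (u',w) \<in> K} = 2"
      proof (cases "(u,w) \<in> M1'")
        case True
        obtain a' where "(u,a')\<in>M1'" "(f u,a')\<in>M2" using fprop uG by blast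
        hence fw: "(f u, w) \<in> M2" using True u1' by metis
        have fu: "f u \<noteq> u" using fw True uwE Eiff by auto
        have fE: "(f u, w) \<in> E" using fw fu True v1' Eiff by metis
        have fK: "(f u, w) \<in> K" using comp_step[of "(u,w)" E "(x,a)" "(f u,w)"] uw uwE fE K_def by auto
        have "{u'. (u',w) \<in> K} = {u, f u}"
        proof
          show "{u'. (u',w) \<in> K} \<subseteq> {u, f u}" using KE Eiff True fw v1' v2 by blast
          show "{u, f u} \<subseteq> {u'. (u',w) \<in> K}" using uw fK by auto
        qed
        thus ?thesis using fu by simp
      next
        case False
        hence uwM2: "(u,w) \<in> M2" using uwE Eiff by auto
        obtain z where zG: "z \<in> G" and uz: "u = f z" using fsurj uG by blast
        obtain a' where "(z,a')\<in>M1'" "(f z,a')\<in>M2" using fprop zG by blast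
        hence zw: "(z,w) \<in> M1'" using uz uwM2 u2 by metis
        have zu: "z \<noteq> u" using zw False by auto
        have zE: "(z, w) \<in> E" using zw zu uwM2 v2 Eiff by metis
        have zK: "(z, w) \<in> K" using comp_step[of "(u,w)" E "(x,a)" "(z,w)"] uw uwE zE K_def by auto
        have "{u'. (u',w) \<in> K} = {u, z}"
        proof
          show "{u'. (u',w) \<in> K} \<subseteq> {u, z}" using KE Eiff zw uwM2 v1' v2 by blast
          show "{u, z} \<subseteq> {u'. (u',w) \<in> K}" using uw zK by auto
        qed
        thus ?thesis using zu by simp
      qed
    qed
    have "is_cycle K" unfolding is_cycle_def using selfK men women by blast
    moreover have "typeII pm pw M1' M2 K" unfolding typeII_def
    proof (intro conjI allI impI)
      fix u w w' assume a1: "(u, w) \<in> K \<inter> M2" and a2: "(u, w') \<in> K \<inter> M1'"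
      have uG: "u \<in> G" using a1 KC by (auto simp: C_def)
      then obtain p q where "(u,p)\<in>M1'" "(u,q)\<in>M2" "pm u p q" by (auto simp: G_def)
      moreover have "w = q" using a1 \<open>(u,q)\<in>M2\<close> u2 by blast
      moreover have "w' = p" using a2 \<open>(u,p)\<in>M1'\<close> u1' by blast
      ultimately show "pm u w' w" by simp
    next
      fix w u u' assume a1: "(u', w) \<in> K \<inter> M1'" and a2: "(u, w) \<in> K \<inter> M2"
      have uG: "u' \<in> G" using a1 KC by (auto simp: C_def)
      then obtain a' where "(u',a')\<in>M1'" "(f u',a')\<in>M2" "pw a' (f u') u'" using fprop by blast
      moreover have "w = a'" using a1 \<open>(u',a')\<in>M1'\<close> u1' by blast
      moreover have "u = f u'" using a2 \<open>(f u',a')\<in>M2\<close> v2 calculation by blast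
      ultimately show "pw w u u'" by simp
    qed
    ultimately show ?thesis by (simp add: K_def)
  qed
  define N where "N = new_matching pm pw M1' M2"
  have NI: "(u,w') \<in> N" if "(u,w') \<in> M1'" "(u,w) \<in> M1 \<inter> M2" "w' = w \<or> pm u w' w" for u w w'
  proof (cases "w' = w")
    case True thus ?thesis using that by (auto simp: N_def new_matching_def Let_def)
  next
    case False
    hence p: "pm u w' w" using that by auto
    have uG: "u \<in> G" using that M1U p by (auto simp: G_def)
    have nM2: "(u,w') \<notin> M2" using that False u2 by blast
    show ?thesis using cyc[OF uG that(1)] that(1) nM2
      by (auto simp: N_def new_matching_def Let_def E_def)
  qed
  define h where "h e = (fst e, SOME w'. (fst e, w') \<in> M1' \<and> (w' = snd e \<or> pm (fst e) w' (snd e)))" for e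
  have hprop: "h e \<in> M1' \<and> (snd (h e) = snd e \<or> pm (fst e) (snd (h e)) (snd e)) \<and> fst (h e) = fst e"
    if "e \<in> M1" for e
  proof -
    obtain u w where e: "e = (u,w)" by (cases e)
    have "\<exists>w'. (u, w') \<in> M1' \<and> (w' = w \<or> pm u w' w)" using dom that e by (auto simp: men_dominates_def)
    from someI_ex[OF this] show ?thesis by (simp add: h_def e)
  qed
  have fM1': "finite M1'" using M1'U fU fW1 finite_subset by blast
  have fM1: "finite M1" using M1U fU fW1 finite_subset by blast
  have c1: "card (M1 \<inter> M2) \<le> card (M1' \<inter> N)"
  proof (rule card_inj_on_le)
    show "inj_on h (M1 \<inter> M2)"
    proof (rule inj_onI)
      fix e1 e2 assume "e1 \<in> M1 \<inter> M2" "e2 \<in> M1 \<inter> M2" "h e1 = h e2"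
      hence "fst e1 = fst e2" using hprop by (metis IntD1)
      thus "e1 = e2" using \<open>e1 \<in> M1 \<inter> M2\<close> \<open>e2 \<in> M1 \<inter> M2\<close> u1 by (metis IntD1 prod.collapse)
    qed
    show "h ` (M1 \<inter> M2) \<subseteq> M1' \<inter> N"
    proof
      fix e' assume "e' \<in> h ` (M1 \<inter> M2)"
      then obtain e where e: "e \<in> M1 \<inter> M2" "e' = h e" by blast
      obtain u w where ee: "e = (u,w)" by (cases e)
      have hp: "h e \<in> M1'" "snd (h e) = w \<or> pm u (snd (h e)) w" "fst (h e) = u"
        using hprop[of e] e ee by auto
      have "(u, snd (h e)) \<in> N" using NI[of u "snd (h e)" w] hp e ee by (metis prod.collapse)
      thus "e' \<in> M1' \<inter> N" using hp e by (metis IntI prod.collapse)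
    qed
    show "finite (M1' \<inter> N)" using fM1' by simp
  qed
  have c2: "card M1' \<le> card M1"
  proof -
    have "card M1' = card (snd ` M1')"
      by (rule card_image[symmetric]) (auto simp: inj_on_def intro: v1')
    also have "\<dots> \<le> card W1" using M1'U fW1 by (intro card_mono) auto
    also have "\<dots> \<le> card (snd ` M1)"
      using women_matched[OF S1 fU fW1] assms(4,5) fM1 by (intro card_mono) auto
    also have "\<dots> \<le> card M1" using fM1 card_image_le by blast
    finally show ?thesis .
  qed
  have "card (M1' - N) = card M1' - card (M1' \<inter> N)" using fM1' by (simp add: card_Diff_subset_Int)
  moreover have "card (M1 - M2) = card M1 - card (M1 \<inter> M2)" using fM1 by (simp add: card_Diff_subset_Int)
  ultimately show ?thesis using c1 c2 unfolding N_def by linarith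
qed

end
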